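(* Let $x$ be a $\theta$-cyclic point with cubic support graph $G_x$, and let $U\subset V_n$ be a critical cut of $G_x$, $\overline U=V_n\setminus U$. Let $y^U\in\mathbb{R}^{E(G_x^U)}$ and $y^{\overline U}\in\mathbb{R}^{E(G_x^{\overline U})}$ have convex combinations $\{\phi^U,\mathscr{F}^U\}$ and $\{\phi^{\overline U},\mathscr{F}^{\overline U}\}$ into handpicked tours of $G_x^U$ (with respect to $x^U$) and of $G_x^{\overline U}$ (with respect to $x^{\overline U}$), respectively. Suppose (i) for every multiset $p$ of edges of $\delta(U)$, $\phi^U_{v_{\overline U}}(p)=\phi^{\overline U}_{v_U}(p)$; and (ii) for every $F\in\mathscr{F}^U$, the multigraph obtained from $F$ by removing all copies of edges incident to $v_{\overline U}$ is connected and spans $U$. Then $y^U_e=y^{\overline U}_e$ for $e\in\delta(U)$, and the vector $y\in\mathbb{R}^{E_x}$ with $y_e=y^U_e$ for $e\in E(G_x^U)$ and $y_e=y^{\overline U}_e$ for $e\in E(G_x^{\overline U})$ can be written as a convex combination $\{\phi,\mathscr{F}\}$ of handpicked tours of $G_x$ such that (a) $\phi_2(e)=\phi^U_2(e)$ for $e\in E(G_x^U)$, (b) $\phi_2(e)=\phi^{\overline U}_2(e)$ for $e\in E(G_x^{\overline U})$, and (c) $|\mathscr{F}|\le|\mathscr{F}^U|+|\mathscr{F}^{\overline U}|$.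
   Context: $K_n$ is the complete graph on $V_n=\{1,\dots,n\}$; $\delta(U)$ is the set of edges with exactly one endpoint in $U$. $\mathrm{SUBT}(K_n)=\{x\in[0,1]^{E_n}: x(\delta(\{i\}))=2\ \forall i,\ x(\delta(U))\ge2\ \forall\,\emptyset\ne U\subsetneq V_n\}$. $G_x=(V_n,E_x)$, $E_x=\{e:x_e>0\}$. A $\theta$-cyclic point ($0<\theta\le\frac12$) is $x\in\mathrm{SUBT}(K_n)\cap\{0,\theta,1-\theta,1\}^{E_n}$ with $G_x$ of maximum degree at most 3 and every vertex incident to an edge of $x$-value 1; $W_x=\{e:x_e=1\}$, $H_x=\{e\in E_x:x_e<1\}$. A proper cut $U$ satisfies $|U|\ge2$, $|V_n\setminus U|\ge2$. A critical cut is a proper cut $U$ with $|\delta(U)|=3$, exactly one edge of $\delta(U)$ of $x$-value 1, and the edges of $\delta(U)$ having pairwise distinct endpoints in $U$ and pairwise distinct endpoints in $V_n\setminus U$. $G_x^U$ is obtained from $G_x$ by identifying all vertices of $\overline U$ into one new vertex $v_{\overline U}$ and deleting loops; $x^U$ is the vector giving each edge of $G_x^U$ its $x$-value (it is again a $\theta$-cyclic point with cubic support). Symmetrically $G_x^{\overline U}$, $v_U$, $x^{\overline U}$. In any such cubic support graph with point $x'$, for each vertex $u$ let $e_u$ be the edge of value 1 at $u$ and $f_u,g_u$ the other two edges with $x'_{f_u}=\theta$, $x'_{g_u}=1-\theta$ (fixed labelling if $\theta=\frac12$). A tour of a graph is a connected, spanning, Eulerian multigraph using only its edges (with repetition); $\chi^F$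 is the multiplicity vector, $\delta_F(u)$ the multiset of edges of $F$ at $u$. $\mathbb{P}_u=\{\{2e_u\},\{e_u,f_u\},\{e_u,g_u\},\{2e_u,2f_u\},\{2e_u,2g_u\},\{2e_u,f_u,g_u\},\{e_u,2f_u,g_u\},\{e_u,f_u,2g_u\}\}$; a tour is handpicked if $\delta_F(u)\in\mathbb{P}_u$ for all vertices $u$. A convex combination $\{\phi,\mathscr{F}\}$ for $y$: finite set of tours, weights $\phi_F\ge0$ summing to 1, $y=\sum_F\phi_F\chi^F$; $\phi_2(e)=\sum_{F:\chi^F_e=2}\phi_F$; $\phi_u(p)=\sum_{F:\delta_F(u)=p}\phi_F$. *)

theory Defs
  imports Complex_Main "HOL-Library.Multiset"
begin

definition Kn_edges :: "nat \<Rightarrow> nat set set" where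
  "Kn_edges n = {{i, j} | i j. i \<in> {1..n} \<and> j \<in> {1..n} \<and> i \<noteq> j}"

definition cut :: "nat \<Rightarrow> nat set \<Rightarrow> nat set set" where
  "cut n U = {e \<in> Kn_edges n. card (e \<inter> U) = 1}"

definition SUBT :: "nat \<Rightarrow> (nat set \<Rightarrow> real) \<Rightarrow> bool" where
  "SUBT n x \<longleftrightarrow>
     (\<forall>e \<in> Kn_edges n. 0 \<le> x e \<and> x e \<le> 1) \<and>
     (\<forall>i \<in> {1..n}. (\<Sum>e \<in> cut n {i}. x e) = 2) \<and>
     (\<forall>U. U \<noteq> {} \<and> U \<subset> {1..n} \<longrightarrow> (\<Sum>e \<in> cut n U. x e) \<ge> 2)"

definition supp_edges :: "nat \<Rightarrow> (nat set \<Rightarrow> real) \<Rightarrow> nat set set" where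
  "supp_edges n x = {e \<in> Kn_edges n. x e > 0}"

definition supp_degree :: "nat \<Rightarrow> (nat set \<Rightarrow> real) \<Rightarrow> nat \<Rightarrow> nat" where
  "supp_degree n x i = card {e \<in> supp_edges n x. i \<in> e}"

definition theta_cyclic :: "nat \<Rightarrow> real \<Rightarrow> (nat set \<Rightarrow> real) \<Rightarrow> bool" where
  "theta_cyclic n \<theta> x \<longleftrightarrow>
     0 < \<theta> \<and> \<theta> \<le> 1/2 \<and> SUBT n x \<and>
     (\<forall>e \<in> Kn_edges n. x e \<in> {0, \<theta>, 1 - \<theta>, 1}) \<and>
     (\<forall>i \<in> {1..n}. supp_degree n x i \<le> 3) \<and>
     (\<forall>i \<in> {1..n}. \<exists>e \<in> Kn_edges n. i \<in> e \<and> x e = 1)"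

definition cubic_support :: "nat \<Rightarrow> (nat set \<Rightarrow> real) \<Rightarrow> bool" where
  "cubic_support n x \<longleftrightarrow> (\<forall>i \<in> {1..n}. supp_degree n x i = 3)"

definition supp_cut :: "nat \<Rightarrow> (nat set \<Rightarrow> real) \<Rightarrow> nat set \<Rightarrow> nat set set" where
  "supp_cut n x U = cut n U \<inter> supp_edges n x"

definition proper_cut :: "nat \<Rightarrow> nat set \<Rightarrow> bool" where
  "proper_cut n U \<longleftrightarrow> U \<subseteq> {1..n} \<and> card U \<ge> 2 \<and> card ({1..n} - U) \<ge> 2"

definition critical_cut :: "nat \<Rightarrow> (nat set \<Rightarrow> real) \<Rightarrow> nat set \<Rightarrow> bool" where
  "critical_cut n x U \<longleftrightarrow>
     proper_cut n U \<and>
     card (supp_cut n x U) = 3 \<and>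
     card {e \<in> supp_cut n x U. x e = 1} = 1 \<and>
     inj_on (\<lambda>e. e \<inter> U) (supp_cut n x U) \<and>
     inj_on (\<lambda>e. e - U) (supp_cut n x U)"

text \<open>We use the vertex 0 (not in V_n = {1..n}) as the new vertex v_{\<bar>U} (resp. v_U).
  An edge of G_x^U is identified with the edge of G_x it comes from; its endpoints
  in G_x^U are given by \<open>contr_ends U\<close>.\<close>

definition contr_verts :: "nat set \<Rightarrow> nat set" where
  "contr_verts U = insert 0 U"

definition contr_edges :: "nat \<Rightarrow> (nat set \<Rightarrow> real) \<Rightarrow> nat set \<Rightarrow> nat set set" where
  "contr_edges n x U = {e \<in> supp_edges n x. e \<inter> U \<noteq> {}}"

definition contr_ends :: "nat set \<Rightarrow> nat set \<Rightarrow> nat set" where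
  "contr_ends U e = (if e \<subseteq> U then e else insert 0 (e \<inter> U))"

text \<open>A tour is represented by its multiplicity vector \<chi> :: 'e \<Rightarrow> nat (zero outside E).\<close>

definition tour_adj :: "('e \<Rightarrow> 'v set) \<Rightarrow> ('e \<Rightarrow> nat) \<Rightarrow> ('v \<times> 'v) set" where
  "tour_adj ends \<chi> = {(a, b). \<exists>e. \<chi> e > 0 \<and> ends e = {a, b}}"

definition mg_connected :: "'v set \<Rightarrow> ('e \<Rightarrow> 'v set) \<Rightarrow> ('e \<Rightarrow> nat) \<Rightarrow> bool" where
  "mg_connected V ends \<chi> \<longleftrightarrow>
     (\<forall>e. \<chi> e > 0 \<longrightarrow> ends e \<subseteq> V) \<and>
     (\<forall>u \<in> V. \<forall>v \<in> V. (u, v) \<in> (tour_adj ends \<chi>)\<^sup>*)"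

definition mult_degree :: "'e set \<Rightarrow> ('e \<Rightarrow> 'v set) \<Rightarrow> ('e \<Rightarrow> nat) \<Rightarrow> 'v \<Rightarrow> nat" where
  "mult_degree E ends \<chi> u = (\<Sum>e \<in> {e \<in> E. u \<in> ends e}. \<chi> e)"

definition is_tour :: "'v set \<Rightarrow> 'e set \<Rightarrow> ('e \<Rightarrow> 'v set) \<Rightarrow> ('e \<Rightarrow> nat) \<Rightarrow> bool" where
  "is_tour V E ends \<chi> \<longleftrightarrow>
     (\<forall>e. e \<notin> E \<longrightarrow> \<chi> e = 0) \<and>
     mg_connected V ends \<chi> \<and>
     (\<forall>u \<in> V. even (mult_degree E ends \<chi> u))"

definition delta_F :: "'e set \<Rightarrow> ('e \<Rightarrow> 'v set) \<Rightarrow> ('e \<Rightarrow> nat) \<Rightarrow> 'v \<Rightarrow> 'e multiset" where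
  "delta_F E ends \<chi> u = (\<Sum>e \<in> {e \<in> E. u \<in> ends e}. replicate_mset (\<chi> e) e)"

definition P_set :: "'e \<Rightarrow> 'e \<Rightarrow> 'e \<Rightarrow> 'e multiset set" where
  "P_set e f g = {{#e, e#}, {#e, f#}, {#e, g#}, {#e, e, f, f#}, {#e, e, g, g#},
                  {#e, e, f, g#}, {#e, f, f, g#}, {#e, f, g, g#}}"

text \<open>Handpicked tour w.r.t. the point w (on the cubic support graph (V,E,ends)):
  at each vertex u, with e_u the edge of value 1, f_u of value \<theta> and g_u of value
  1-\<theta> (P_u is symmetric in f_u, g_u, so the labelling for \<theta> = 1/2 is irrelevant).\<close>
definition handpicked ::
  "real \<Rightarrow> ('e \<Rightarrow> real) \<Rightarrow> 'v set \<Rightarrow> 'e set \<Rightarrow> ('e \<Rightarrow> 'v set) \<Rightarrow> ('e \<Rightarrow> nat) \<Rightarrow> bool" where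
  "handpicked \<theta> w V E ends \<chi> \<longleftrightarrow>
     is_tour V E ends \<chi> \<and>
     (\<forall>u \<in> V. \<exists>eu fu gu. {e \<in> E. u \<in> ends e} = {eu, fu, gu} \<and>
        eu \<noteq> fu \<and> eu \<noteq> gu \<and> fu \<noteq> gu \<and>
        w eu = 1 \<and> w fu = \<theta> \<and> w gu = 1 - \<theta> \<and>
        delta_F E ends \<chi> u \<in> P_set eu fu gu)"

definition convex_comb_handpicked ::
  "real \<Rightarrow> ('e \<Rightarrow> real) \<Rightarrow> 'v set \<Rightarrow> 'e set \<Rightarrow> ('e \<Rightarrow> 'v set) \<Rightarrow>
   ('e \<Rightarrow> real) \<Rightarrow> (('e \<Rightarrow> nat) \<Rightarrow> real) \<Rightarrow> ('e \<Rightarrow> nat) set \<Rightarrow> bool" where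
  "convex_comb_handpicked \<theta> w V E ends y \<phi> \<F> \<longleftrightarrow>
     finite \<F> \<and>
     (\<forall>F \<in> \<F>. handpicked \<theta> w V E ends F) \<and>
     (\<forall>F \<in> \<F>. \<phi> F \<ge> 0) \<and>
     (\<Sum>F \<in> \<F>. \<phi> F) = 1 \<and>
     (\<forall>e \<in> E. y e = (\<Sum>F \<in> \<F>. \<phi> F * real (F e)))"

definition phi2 :: "(('e \<Rightarrow> nat) \<Rightarrow> real) \<Rightarrow> ('e \<Rightarrow> nat) set \<Rightarrow> 'e \<Rightarrow> real" where
  "phi2 \<phi> \<F> e = (\<Sum>F \<in> {F \<in> \<F>. F e = 2}. \<phi> F)"

definition phi_vertex ::
  "'e set \<Rightarrow> ('e \<Rightarrow> 'v set) \<Rightarrow> (('e \<Rightarrow> nat) \<Rightarrow> real) \<Rightarrow> ('e \<Rightarrow> nat) set \<Rightarrow> 'v \<Rightarrow> 'e multiset \<Rightarrow> real" where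
  "phi_vertex E ends \<phi> \<F> u p = (\<Sum>F \<in> {F \<in> \<F>. delta_F E ends F u = p}. \<phi> F)"

end

theory Submission
  imports Defs
begin

lemma sum_upd_real:
  fixes f :: "'a \<Rightarrow> real"
  assumes "finite S"
  shows "sum (f(b:=c)) S = sum f S + (if b \<in> S then c - f b else 0)"
proof (cases "b \<in> S")
  case True
  have "sum (f(b:=c)) S = c + sum (f(b:=c)) (S - {b})" using sum.remove[OF assms True, of "f(b:=c)"] by simp
  also have "sum (f(b:=c)) (S - {b}) = sum f (S - {b})" by (rule sum.cong) auto
  finally show ?thesis using sum.remove[OF assms True, of f] True by simp
next
  case False
  then show ?thesis by (auto intro: sum.cong)
qed

lemma sum_ins_upd:
  fixes w :: "'q \<Rightarrow> real"
  assumes "finite P" "q0 \<notin> P"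
  shows "(\<Sum>q\<in>insert q0 P. if g q then (w(q0:=t)) q else 0) = (if g q0 then t else 0) + (\<Sum>q\<in>P. if g q then w q else 0)"
proof -
  have "(\<Sum>q\<in>P. if g q then (w(q0:=t)) q else 0) = (\<Sum>q\<in>P. if g q then w q else 0)"
    by (rule sum.cong) (use assms in auto)
  then show ?thesis using assms by simp
qed

lemma coupling:
  fixes \<alpha> :: "'a \<Rightarrow> real" and \<beta> :: "'b \<Rightarrow> real" and ka :: "'a \<Rightarrow> 'k" and kb :: "'b \<Rightarrow> 'k"
  assumes "finite A" "finite B" "\<forall>a\<in>A. \<alpha> a \<ge> 0" "\<forall>b\<in>B. \<beta> b \<ge> 0"
    "\<forall>p. sum \<alpha> {a\<in>A. ka a = p} = sum \<beta> {b\<in>B. kb b = p}"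
  shows "\<exists>P w. P \<subseteq> A \<times> B \<and> card P \<le> card A + card B \<and>
     (\<forall>q\<in>P. ka (fst q) = kb (snd q) \<and> w q \<ge> 0) \<and>
     (\<forall>a\<in>A. (\<Sum>q\<in>P. if fst q = a then w q else 0) = \<alpha> a) \<and>
     (\<forall>b\<in>B. (\<Sum>q\<in>P. if snd q = b then w q else 0) = \<beta> b)"
  using assms
proof (induction "card A + card B" arbitrary: A B \<alpha> \<beta> rule: less_induct)
  case less
  note fA = less.prems(1) and fB = less.prems(2) and nA = less.prems(3) and nB = less.prems(4)
    and cl = less.prems(5)
  show ?case
  proof (cases "A = {}")
    case True
    have "\<forall>b\<in>B. \<beta> b = 0"
    proof
      fix b assume b: "b \<in> B"
      have "sum \<beta> {b'\<in>B. kb b' = kb b} = 0" using cl[rule_format, of "kb b"] True by simp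
      then have "\<forall>b'\<in>{b'\<in>B. kb b' = kb b}. \<beta> b' = 0"
        using sum_nonneg_eq_0_iff[of "{b'\<in>B. kb b' = kb b}" \<beta>] fB nB by auto
      then show "\<beta> b = 0" using b by auto
    qed
    then show ?thesis using True by (intro exI[of _ "{}"] exI[of _ "\<lambda>_. 0"]) simp
  next
    case False
    then obtain a where a: "a \<in> A" by auto
    show ?thesis
    proof (cases "\<exists>b\<in>B. kb b = ka a \<and> \<beta> b > 0")
      case False
      have "\<forall>b'\<in>{b'\<in>B. kb b' = ka a}. \<beta> b' = 0" using False nB by force
      then have "sum \<beta> {b'\<in>B. kb b' = ka a} = 0" by simp
      then have "sum \<alpha> {a'\<in>A. ka a' = ka a} = 0" using cl by simp
      then have "\<forall>a'\<in>{a'\<in>A. ka a' = ka a}. \<alpha> a' = 0"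
        using sum_nonneg_eq_0_iff[of "{a'\<in>A. ka a' = ka a}" \<alpha>] fA nA by auto
      then have a0: "\<alpha> a = 0" using a by auto
      have cl': "\<forall>p. sum \<alpha> {a'\<in>A - {a}. ka a' = p} = sum \<beta> {b\<in>B. kb b = p}"
      proof
        fix p
        have "{a'\<in>A - {a}. ka a' = p} = {a'\<in>A. ka a' = p} - {a}" by auto
        then have "sum \<alpha> {a'\<in>A - {a}. ka a' = p} = sum \<alpha> {a'\<in>A. ka a' = p}"
          using sum_diff1[of "{a'\<in>A. ka a' = p}" \<alpha> a] fA a0 by simp
        then show "sum \<alpha> {a'\<in>A - {a}. ka a' = p} = sum \<beta> {b\<in>B. kb b = p}" using cl by simp
      qed
      have lt: "card (A - {a}) + card B < card A + card B" using card_Diff1_less[OF fA a] by simp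
      obtain P w where P: "P \<subseteq> (A - {a}) \<times> B" "card P \<le> card (A - {a}) + card B"
        "\<forall>q\<in>P. ka (fst q) = kb (snd q) \<and> w q \<ge> 0"
        "\<forall>a'\<in>A - {a}. (\<Sum>q\<in>P. if fst q = a' then w q else 0) = \<alpha> a'"
        "\<forall>b\<in>B. (\<Sum>q\<in>P. if snd q = b then w q else 0) = \<beta> b"
        using less.hyps[OF lt _ fB _ nB cl'] fA nA by auto
      have "(\<Sum>q\<in>P. if fst q = a then w q else 0) = 0"
        by (rule sum.neutral) (use P(1) in auto)
      note z = this
      have c1: "card (A - {a}) \<le> card A" using lt by simp
      show ?thesis
      proof (intro exI[of _ P] exI[of _ w] conjI)
        show "P \<subseteq> A \<times> B" using P(1) by auto
        show "card P \<le> card A + card B" using P(2) c1 by linarith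
        show "\<forall>q\<in>P. ka (fst q) = kb (snd q) \<and> 0 \<le> w q" using P(3) .
        show "\<forall>b\<in>B. (\<Sum>q\<in>P. if snd q = b then w q else 0) = \<beta> b" using P(5) .
        show "\<forall>a'\<in>A. (\<Sum>q\<in>P. if fst q = a' then w q else 0) = \<alpha> a'"
        proof
          fix a' assume "a' \<in> A"
          then show "(\<Sum>q\<in>P. if fst q = a' then w q else 0) = \<alpha> a'"
            using z a0 P(4) by (cases "a' = a") auto
        qed
      qed
    next
      case True
      then obtain b where b: "b \<in> B" "kb b = ka a" "\<beta> b > 0" by auto
      show ?thesis
      proof (cases "\<alpha> a \<le> \<beta> b")
        case True
        define \<beta>' where "\<beta>' = \<beta>(b := \<beta> b - \<alpha> a)"
        have cl': "\<forall>p. sum \<alpha> {a'\<in>A - {a}. ka a' = p} = sum \<beta>' {b\<in>B. kb b = p}"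
        proof
          fix p
          have "{a'\<in>A - {a}. ka a' = p} = {a'\<in>A. ka a' = p} - {a}" by auto
          then have 1: "sum \<alpha> {a'\<in>A - {a}. ka a' = p} = sum \<alpha> {a'\<in>A. ka a' = p} - (if ka a = p then \<alpha> a else 0)"
            using sum_diff1[of "{a'\<in>A. ka a' = p}" \<alpha> a] fA a by simp
          have 2: "sum \<beta>' {b\<in>B. kb b = p} = sum \<beta> {b\<in>B. kb b = p} - (if kb b = p then \<alpha> a else 0)"
            unfolding \<beta>'_def using sum_upd_real[of "{b\<in>B. kb b = p}" \<beta> b "\<beta> b - \<alpha> a"] fB b by simp
          show "sum \<alpha> {a'\<in>A - {a}. ka a' = p} = sum \<beta>' {b\<in>B. kb b = p}"
            using 1 2 cl b(2) by simp
        qed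
        have lt: "card (A - {a}) + card B < card A + card B" using card_Diff1_less[OF fA a] by simp
        have nB': "\<forall>b\<in>B. \<beta>' b \<ge> 0" using nB True unfolding \<beta>'_def by auto
        obtain P w where P: "P \<subseteq> (A - {a}) \<times> B" "card P \<le> card (A - {a}) + card B"
          "\<forall>q\<in>P. ka (fst q) = kb (snd q) \<and> w q \<ge> 0"
          "\<forall>a'\<in>A - {a}. (\<Sum>q\<in>P. if fst q = a' then w q else 0) = \<alpha> a'"
          "\<forall>b'\<in>B. (\<Sum>q\<in>P. if snd q = b' then w q else 0) = \<beta>' b'"
          using less.hyps[OF lt _ fB _ nB' cl'] fA nA by auto
        have fP: "finite P" using P(1) fA fB by (meson finite_Diff finite_SigmaI finite_subset)
        have nin: "(a, b) \<notin> P" using P(1) by auto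
        have cardA: "card A = Suc (card (A - {a}))" using card_Suc_Diff1[OF fA a] by simp
        show ?thesis
        proof (intro exI[of _ "insert (a,b) P"] exI[of _ "w((a,b) := \<alpha> a)"] conjI)
          show "insert (a, b) P \<subseteq> A \<times> B" using P(1) a b by auto
          show "card (insert (a, b) P) \<le> card A + card B" using P(2) fP cardA nin by simp
          show "\<forall>q\<in>insert (a, b) P. ka (fst q) = kb (snd q) \<and> 0 \<le> (w((a, b) := \<alpha> a)) q"
            using P(3) b nA a nin by auto
          show "\<forall>a'\<in>A. (\<Sum>q\<in>insert (a, b) P. if fst q = a' then (w((a, b) := \<alpha> a)) q else 0) = \<alpha> a'"
          proof
            fix a' assume a': "a' \<in> A"
            have e: "(\<Sum>q\<in>insert (a, b) P. if fst q = a' then (w((a, b) := \<alpha> a)) q else 0)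
              = (if a = a' then \<alpha> a else 0) + (\<Sum>q\<in>P. if fst q = a' then w q else 0)"
              using sum_ins_upd[OF fP nin, of "\<lambda>q. fst q = a'"] by simp
            show "(\<Sum>q\<in>insert (a, b) P. if fst q = a' then (w((a, b) := \<alpha> a)) q else 0) = \<alpha> a'"
            proof (cases "a' = a")
              case True
              have "(\<Sum>q\<in>P. if fst q = a' then w q else 0) = 0"
                by (rule sum.neutral) (use P(1) True in auto)
              then show ?thesis using e True by simp
            next
              case False
              then show ?thesis using e P(4) a' by auto
            qed
          qed
          show "\<forall>b'\<in>B. (\<Sum>q\<in>insert (a, b) P. if snd q = b' then (w((a, b) := \<alpha> a)) q else 0) = \<beta> b'"
          proof
            fix b' assume b': "b' \<in> B"
            have e: "(\<Sum>q\<in>insert (a, b) P. if snd q = b' then (w((a, b) := \<alpha> a)) q else 0)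
              = (if b = b' then \<alpha> a else 0) + (\<Sum>q\<in>P. if snd q = b' then w q else 0)"
              using sum_ins_upd[OF fP nin, of "\<lambda>q. snd q = b'"] by simp
            then show "(\<Sum>q\<in>insert (a, b) P. if snd q = b' then (w((a, b) := \<alpha> a)) q else 0) = \<beta> b'"
              using P(5) b' unfolding \<beta>'_def by (cases "b' = b") auto
          qed
        qed
      next
        case False
        define \<alpha>' where "\<alpha>' = \<alpha>(a := \<alpha> a - \<beta> b)"
        have cl': "\<forall>p. sum \<alpha>' {a'\<in>A. ka a' = p} = sum \<beta> {b'\<in>B - {b}. kb b' = p}"
        proof
          fix p
          have "{b'\<in>B - {b}. kb b' = p} = {b'\<in>B. kb b' = p} - {b}" by auto
          then have 1: "sum \<beta> {b'\<in>B - {b}. kb b' = p} = sum \<beta> {b'\<in>B. kb b' = p} - (if kb b = p then \<beta> b else 0)"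
            using sum_diff1[of "{b'\<in>B. kb b' = p}" \<beta> b] fB b by simp
          have 2: "sum \<alpha>' {a'\<in>A. ka a' = p} = sum \<alpha> {a'\<in>A. ka a' = p} - (if ka a = p then \<beta> b else 0)"
            unfolding \<alpha>'_def using sum_upd_real[of "{a'\<in>A. ka a' = p}" \<alpha> a "\<alpha> a - \<beta> b"] fA a by simp
          show "sum \<alpha>' {a'\<in>A. ka a' = p} = sum \<beta> {b'\<in>B - {b}. kb b' = p}"
            using 1 2 cl b(2) by simp
        qed
        have lt: "card A + card (B - {b}) < card A + card B" using card_Diff1_less[OF fB b(1)] by simp
        have nA': "\<forall>a\<in>A. \<alpha>' a \<ge> 0" using nA False unfolding \<alpha>'_def by auto
        obtain P w where P: "P \<subseteq> A \<times> (B - {b})" "card P \<le> card A + card (B - {b})"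
          "\<forall>q\<in>P. ka (fst q) = kb (snd q) \<and> w q \<ge> 0"
          "\<forall>a'\<in>A. (\<Sum>q\<in>P. if fst q = a' then w q else 0) = \<alpha>' a'"
          "\<forall>b'\<in>B - {b}. (\<Sum>q\<in>P. if snd q = b' then w q else 0) = \<beta> b'"
          using less.hyps[OF lt fA _ nA' _ cl'] fB nB by auto
        have fP: "finite P" using P(1) fA fB by (meson finite_Diff finite_SigmaI finite_subset)
        have nin: "(a, b) \<notin> P" using P(1) by auto
        have cardB: "card B = Suc (card (B - {b}))" using card_Suc_Diff1[OF fB b(1)] by simp
        show ?thesis
        proof (intro exI[of _ "insert (a,b) P"] exI[of _ "w((a,b) := \<beta> b)"] conjI)
          show "insert (a, b) P \<subseteq> A \<times> B" using P(1) a b by auto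
          show "card (insert (a, b) P) \<le> card A + card B" using P(2) fP cardB nin by simp
          show "\<forall>q\<in>insert (a, b) P. ka (fst q) = kb (snd q) \<and> 0 \<le> (w((a, b) := \<beta> b)) q"
            using P(3) b nin by auto
          show "\<forall>b'\<in>B. (\<Sum>q\<in>insert (a, b) P. if snd q = b' then (w((a, b) := \<beta> b)) q else 0) = \<beta> b'"
          proof
            fix b' assume b': "b' \<in> B"
            have e: "(\<Sum>q\<in>insert (a, b) P. if snd q = b' then (w((a, b) := \<beta> b)) q else 0)
              = (if b = b' then \<beta> b else 0) + (\<Sum>q\<in>P. if snd q = b' then w q else 0)"
              using sum_ins_upd[OF fP nin, of "\<lambda>q. snd q = b'"] by simp
            show "(\<Sum>q\<in>insert (a, b) P. if snd q = b' then (w((a, b) := \<beta> b)) q else 0) = \<beta> b'"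
            proof (cases "b' = b")
              case True
              have "(\<Sum>q\<in>P. if snd q = b' then w q else 0) = 0"
                by (rule sum.neutral) (use P(1) True in auto)
              then show ?thesis using e True by simp
            next
              case False
              then show ?thesis using e P(5) b' by auto
            qed
          qed
          show "\<forall>a'\<in>A. (\<Sum>q\<in>insert (a, b) P. if fst q = a' then (w((a, b) := \<beta> b)) q else 0) = \<alpha> a'"
          proof
            fix a' assume a': "a' \<in> A"
            have e: "(\<Sum>q\<in>insert (a, b) P. if fst q = a' then (w((a, b) := \<beta> b)) q else 0)
              = (if a = a' then \<beta> b else 0) + (\<Sum>q\<in>P. if fst q = a' then w q else 0)"
              using sum_ins_upd[OF fP nin, of "\<lambda>q. fst q = a'"] by simp
            then show "(\<Sum>q\<in>insert (a, b) P. if fst q = a' then (w((a, b) := \<beta> b)) q else 0) = \<alpha> a'"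
              using P(4) a' unfolding \<alpha>'_def by (cases "a' = a") auto
          qed
        qed
      qed
    qed
  qed
qed

lemma Kn_edges_finite: "finite (Kn_edges n)"
proof -
  have "Kn_edges n \<subseteq> Pow {1..n}" unfolding Kn_edges_def by auto
  then show ?thesis by (rule finite_subset) simp
qed

lemma Kn_edgesE:
  assumes "e \<in> Kn_edges n"
  obtains i j where "e = {i,j}" "i \<in> {1..n}" "j \<in> {1..n}" "i \<noteq> j"
  using assms unfolding Kn_edges_def by auto

lemma Kn_edge_two:
  assumes "e \<in> Kn_edges n" "y \<in> e" "z \<in> e" "y \<noteq> z"
  shows "e = {y, z}"
  using assms by (elim Kn_edgesE) auto

lemma Kn_edge_sub: "e \<in> Kn_edges n \<Longrightarrow> e \<subseteq> {1..n}"
  by (elim Kn_edgesE) auto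

lemma contr_edges_sub: "contr_edges n x W \<subseteq> supp_edges n x"
  unfolding contr_edges_def by auto

lemma supp_edges_sub: "supp_edges n x \<subseteq> Kn_edges n"
  unfolding supp_edges_def by auto

lemma contr_edges_finite: "finite (contr_edges n x W)"
  using contr_edges_sub supp_edges_sub Kn_edges_finite by (metis finite_subset)

lemma supp_edges_finite: "finite (supp_edges n x)"
  using supp_edges_sub Kn_edges_finite by (metis finite_subset)

lemma star_sets:
  assumes "W \<subseteq> {1..n}" "u \<in> W"
  shows "{e \<in> supp_edges n x. u \<in> id e} = {e \<in> contr_edges n x W. u \<in> contr_ends W e}"
proof -
  have "u \<noteq> 0" using assms by auto
  then show ?thesis using assms unfolding contr_edges_def contr_ends_def by auto
qed

lemma deg_transfer:
  assumes "{e\<in>E. u \<in> ends e} = {e\<in>E'. u \<in> ends' e}" "\<forall>e\<in>{e\<in>E. u\<in>ends e}. \<chi> e = \<chi>' e"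
  shows "mult_degree E ends \<chi> u = mult_degree E' ends' \<chi>' u"
    "delta_F E ends \<chi> u = delta_F E' ends' \<chi>' u"
  unfolding mult_degree_def delta_F_def using assms by (metis (no_types, lifting) sum.cong)+

lemma count_delta:
  assumes "finite E" "e \<in> E" "u \<in> ends e"
  shows "count (delta_F E ends \<chi> u) e = \<chi> e"
proof -
  have "count (delta_F E ends \<chi> u) e = (\<Sum>e'\<in>{e \<in> E. u \<in> ends e}. if e' = e then \<chi> e' else 0)"
    unfolding delta_F_def count_sum by (intro sum.cong) auto
  also have "\<dots> = \<chi> e" using assms by (simp add: sum.delta)
  finally show ?thesis .
qed

lemma set_delta:
  assumes "finite E"
  shows "set_mset (delta_F E ends \<chi> u) \<subseteq> {e\<in>E. u \<in> ends e}"
  unfolding delta_F_def using assms by (auto simp: set_mset_sum split: if_splits)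

lemma zero_ends:
  assumes "W \<subseteq> {1..n}" "e \<in> contr_edges n x W" "0 \<in> contr_ends W e"
  shows "e \<in> supp_edges n x \<and> e \<inter> W \<noteq> {} \<and> \<not> e \<subseteq> W"
proof -
  have "0 \<notin> W" using assms(1) by auto
  then show ?thesis using assms unfolding contr_edges_def contr_ends_def by (auto split: if_splits)
qed

lemma in_cut:
  assumes "e \<in> Kn_edges n" "U \<subseteq> {1..n}" "e \<inter> U \<noteq> {}" "\<not> e \<subseteq> U"
  shows "e \<in> cut n U"
proof -
  obtain i j where e: "e = {i,j}" "i \<in> {1..n}" "j \<in> {1..n}" "i \<noteq> j" using assms(1) by (rule Kn_edgesE)
  have "e \<inter> U = {i} \<or> e \<inter> U = {j}" using assms(3,4) e by auto
  then show ?thesis unfolding cut_def using assms(1) by auto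
qed

lemma cut_both:
  assumes "e \<in> cut n U"
  shows "e \<inter> U \<noteq> {} \<and> e \<inter> ({1..n} - U) \<noteq> {}"
proof -
  have k: "e \<in> Kn_edges n" and c: "card (e \<inter> U) = 1" using assms unfolding cut_def by auto
  obtain i j where e: "e = {i,j}" "i \<in> {1..n}" "j \<in> {1..n}" "i \<noteq> j" using k by (rule Kn_edgesE)
  have "e \<inter> U \<noteq> {}" using c by auto
  moreover have "\<not> e \<subseteq> U" using c e by (auto simp: Int_absorb2)
  ultimately show ?thesis using e by auto
qed

lemma glue_handpicked:
  fixes a b :: "nat set \<Rightarrow> nat" and n :: nat and U :: "nat set"
  defines "Ub \<equiv> {1..n} - U"
  assumes Usub: "U \<subseteq> {1..n}"
    and ha: "handpicked \<theta> x (contr_verts U) (contr_edges n x U) (contr_ends U) a"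
    and hb: "handpicked \<theta> x (contr_verts Ub) (contr_edges n x Ub) (contr_ends Ub) b"
    and ca: "mg_connected U id (\<lambda>e. if e \<subseteq> U then a e else 0)"
    and ab: "\<forall>e\<in>contr_edges n x U \<inter> contr_edges n x Ub. a e = b e"
  shows "handpicked \<theta> x {1..n} (supp_edges n x) id (\<lambda>e. if e \<inter> U \<noteq> {} then a e else b e)"
proof -
  define g where "g = (\<lambda>e. if e \<inter> U \<noteq> {} then a e else b e)"
  have ta: "is_tour (contr_verts U) (contr_edges n x U) (contr_ends U) a" using ha unfolding handpicked_def by auto
  have tb: "is_tour (contr_verts Ub) (contr_edges n x Ub) (contr_ends Ub) b" using hb unfolding handpicked_def by auto
  have Ubsub: "Ub \<subseteq> {1..n}" unfolding Ub_def by auto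
  have a0: "\<And>e. e \<notin> contr_edges n x U \<Longrightarrow> a e = 0" using ta unfolding is_tour_def by auto
  have b0: "\<And>e. e \<notin> contr_edges n x Ub \<Longrightarrow> b e = 0" using tb unfolding is_tour_def by auto
  have Z: "\<And>e. e \<notin> supp_edges n x \<Longrightarrow> g e = 0"
    unfolding g_def using a0 b0 contr_edges_sub by fastforce
  have gpos: "\<And>e. g e > 0 \<Longrightarrow> e \<in> supp_edges n x" using Z by (metis less_irrefl)
  have inEU: "\<And>e. e \<in> supp_edges n x \<Longrightarrow> e \<inter> U \<noteq> {} \<Longrightarrow> e \<in> contr_edges n x U"
    unfolding contr_edges_def by auto
  have inEUb: "\<And>e. e \<in> supp_edges n x \<Longrightarrow> e \<inter> Ub \<noteq> {} \<Longrightarrow> e \<in> contr_edges n x Ub"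
    unfolding contr_edges_def by auto
  have LU: "\<And>u. u \<in> U \<Longrightarrow> {e \<in> supp_edges n x. u \<in> id e} = {e \<in> contr_edges n x U. u \<in> contr_ends U e}
      \<and> (\<forall>e\<in>{e \<in> supp_edges n x. u \<in> id e}. g e = a e)"
    using star_sets[OF Usub] unfolding g_def by auto
  have LUb: "\<And>u. u \<in> Ub \<Longrightarrow> {e \<in> supp_edges n x. u \<in> id e} = {e \<in> contr_edges n x Ub. u \<in> contr_ends Ub e}
      \<and> (\<forall>e\<in>{e \<in> supp_edges n x. u \<in> id e}. g e = b e)"
  proof
    fix u assume u: "u \<in> Ub"
    show "{e \<in> supp_edges n x. u \<in> id e} = {e \<in> contr_edges n x Ub. u \<in> contr_ends Ub e}"
      using star_sets[OF Ubsub u] .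
    show "\<forall>e\<in>{e \<in> supp_edges n x. u \<in> id e}. g e = b e"
    proof
      fix e assume e: "e \<in> {e \<in> supp_edges n x. u \<in> id e}"
      then have eUb: "e \<in> contr_edges n x Ub" using inEUb u by auto
      show "g e = b e"
      proof (cases "e \<inter> U = {}")
        case True then show ?thesis unfolding g_def by simp
      next
        case False
        then have "e \<in> contr_edges n x U" using inEU e by auto
        then show ?thesis using ab eUb False unfolding g_def by auto
      qed
    qed
  qed
  have V: "{1..n} = U \<union> Ub" using Usub unfolding Ub_def by auto
  define R where "R = tour_adj id g"
  have symR: "sym (R\<^sup>*)"
    by (rule sym_rtrancl) (auto simp: sym_def R_def tour_adj_def insert_commute)
  have C1: "\<And>u v. u \<in> U \<Longrightarrow> v \<in> U \<Longrightarrow> (u, v) \<in> R\<^sup>*"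
  proof -
    fix u v assume "u \<in> U" "v \<in> U"
    then have "(u, v) \<in> (tour_adj id (\<lambda>e. if e \<subseteq> U then a e else 0))\<^sup>*"
      using ca unfolding mg_connected_def by auto
    moreover have "tour_adj id (\<lambda>e. if e \<subseteq> U then a e else 0) \<subseteq> R"
    proof
      fix p assume "p \<in> tour_adj id (\<lambda>e. if e \<subseteq> U then a e else 0)"
      then obtain c d e where p: "p = (c, d)" "(if e \<subseteq> U then a e else 0) > 0" "e = {c, d}"
        unfolding tour_adj_def by auto
      then have "e \<subseteq> U" "a e > 0" by (auto split: if_splits)
      then have "g e > 0" using p(3) unfolding g_def by auto
      then show "p \<in> R" using p unfolding R_def tour_adj_def by auto
    qed
    ultimately show "(u, v) \<in> R\<^sup>*" using rtrancl_mono by blast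
  qed
  have C2: "\<And>v. v \<in> Ub \<Longrightarrow> \<exists>u\<in>U. (v, u) \<in> R\<^sup>*"
  proof -
    fix v assume v: "v \<in> Ub"
    have "(v, 0) \<in> (tour_adj (contr_ends Ub) b)\<^sup>*"
      using tb v unfolding is_tour_def mg_connected_def contr_verts_def by auto
    then have "v = 0 \<or> (\<exists>u\<in>U. (v, u) \<in> R\<^sup>*)"
    proof (induction rule: converse_rtrancl_induct)
      case base then show ?case by simp
    next
      case (step y z)
      obtain e where e: "b e > 0" "contr_ends Ub e = {y, z}"
        using step.hyps(1) unfolding tour_adj_def by auto
      have eEUb: "e \<in> contr_edges n x Ub" using b0 e(1) by (metis less_irrefl)
      then have eS: "e \<in> supp_edges n x" using contr_edges_sub by auto
      then have eK: "e \<in> Kn_edges n" using supp_edges_sub by auto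
      then have e1n: "e \<subseteq> {1..n}" by (rule Kn_edge_sub)
      show ?case
      proof (cases "e \<subseteq> Ub")
        case True
        then have ee: "e = {y, z}" using e(2) unfolding contr_ends_def by auto
        have "e \<inter> U = {}" using True unfolding Ub_def by auto
        then have "g e > 0" using e(1) unfolding g_def by auto
        then have yz: "(y, z) \<in> R" using ee unfolding R_def tour_adj_def by auto
        have "z \<noteq> 0" using ee True Ubsub by auto
        then obtain u where "u \<in> U" "(z, u) \<in> R\<^sup>*" using step.IH by auto
        then show ?thesis using yz by (meson converse_rtrancl_into_rtrancl)
      next
        case False
        then have ee: "insert 0 (e \<inter> Ub) = {y, z}" using e(2) unfolding contr_ends_def by auto
        show ?thesis
        proof (cases "y = 0")
          case True then show ?thesis by simp
        next
          case False
          have "y \<in> insert 0 (e \<inter> Ub)" unfolding ee by simp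
          then have ye: "y \<in> e" "y \<in> Ub" using False by auto
          obtain j where j: "j \<in> e" "j \<notin> Ub" using \<open>\<not> e \<subseteq> Ub\<close> by auto
          then have jU: "j \<in> U" using e1n unfolding Ub_def by auto
          have yj: "y \<noteq> j" using ye j by auto
          have eyj: "e = {y, j}" using Kn_edge_two[OF eK ye(1) j(1) yj] .
          have "e \<in> contr_edges n x U" using inEU eS jU j by auto
          then have "a e = b e" using ab eEUb by auto
          then have "g e > 0" using e(1) jU j unfolding g_def by auto
          then have "(y, j) \<in> R" using eyj unfolding R_def tour_adj_def by auto
          then show ?thesis using jU by blast
        qed
      qed
    qed
    then show "\<exists>u\<in>U. (v, u) \<in> R\<^sup>*" using v Ubsub by auto
  qed
  have C3: "\<And>v. v \<in> {1..n} \<Longrightarrow> \<exists>u\<in>U. (v, u) \<in> R\<^sup>*"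
    using C2 V by auto
  have conn: "mg_connected {1..n} id g"
    unfolding mg_connected_def
  proof (intro conjI ballI allI impI)
    fix e assume "0 < g e"
    then have "e \<in> supp_edges n x" by (rule gpos)
    then have "e \<in> Kn_edges n" using supp_edges_sub by blast
    then show "id e \<subseteq> {1..n}" using Kn_edge_sub by simp
  next
    fix u v assume u: "u \<in> {1..n}" and v: "v \<in> {1..n}"
    obtain u' where u': "u' \<in> U" "(u, u') \<in> R\<^sup>*" using C3[OF u] by auto
    obtain v' where v': "v' \<in> U" "(v, v') \<in> R\<^sup>*" using C3[OF v] by auto
    have "(v', v) \<in> R\<^sup>*" using symR v'(2) by (meson symD)
    then show "(u, v) \<in> (tour_adj id g)\<^sup>*"
      using u'(2) C1[OF u'(1) v'(1)] unfolding R_def by (meson rtrancl_trans)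
  qed
  have loc: "\<And>u. u \<in> {1..n} \<Longrightarrow> even (mult_degree (supp_edges n x) id g u) \<and>
     (\<exists>eu fu gu. {e \<in> supp_edges n x. u \<in> id e} = {eu, fu, gu} \<and>
        eu \<noteq> fu \<and> eu \<noteq> gu \<and> fu \<noteq> gu \<and>
        x eu = 1 \<and> x fu = \<theta> \<and> x gu = 1 - \<theta> \<and>
        delta_F (supp_edges n x) id g u \<in> P_set eu fu gu)"
  proof -
    fix u assume u: "u \<in> {1..n}"
    show "?thesis u"
    proof (cases "u \<in> U")
      case True
      note L = LU[OF True]
      have uV: "u \<in> contr_verts U" using True unfolding contr_verts_def by auto
      have md: "mult_degree (supp_edges n x) id g u = mult_degree (contr_edges n x U) (contr_ends U) a u"
        using deg_transfer(1)[OF conjunct1[OF L] conjunct2[OF L]] .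
      have dl: "delta_F (supp_edges n x) id g u = delta_F (contr_edges n x U) (contr_ends U) a u"
        using deg_transfer(2)[OF conjunct1[OF L] conjunct2[OF L]] .
      show ?thesis unfolding md dl conjunct1[OF L]
        using ta ha uV unfolding is_tour_def handpicked_def by blast
    next
      case False
      then have uUb: "u \<in> Ub" using u unfolding Ub_def by auto
      note L = LUb[OF uUb]
      have uV: "u \<in> contr_verts Ub" using uUb unfolding contr_verts_def by auto
      have md: "mult_degree (supp_edges n x) id g u = mult_degree (contr_edges n x Ub) (contr_ends Ub) b u"
        using deg_transfer(1)[OF conjunct1[OF L] conjunct2[OF L]] .
      have dl: "delta_F (supp_edges n x) id g u = delta_F (contr_edges n x Ub) (contr_ends Ub) b u"
        using deg_transfer(2)[OF conjunct1[OF L] conjunct2[OF L]] .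
      show ?thesis unfolding md dl conjunct1[OF L]
        using tb hb uV unfolding is_tour_def handpicked_def by blast
    qed
  qed
  have "handpicked \<theta> x {1..n} (supp_edges n x) id g"
    unfolding handpicked_def is_tour_def using Z conn loc by blast
  then show ?thesis unfolding g_def .
qed

lemma fiber_sum:
  fixes w :: "'q \<Rightarrow> real"
  assumes "finite P"
  shows "(\<Sum>q\<in>{q\<in>P. f q = a}. w q * g (f q)) = (\<Sum>q\<in>P. if f q = a then w q else 0) * g a"
proof -
  have "(\<Sum>q\<in>{q\<in>P. f q = a}. w q * g (f q)) = (\<Sum>q\<in>{q\<in>P. f q = a}. w q * g a)"
    by (rule sum.cong) auto
  also have "\<dots> = (\<Sum>q\<in>{q\<in>P. f q = a}. w q) * g a" by (simp add: sum_distrib_right)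
  also have "\<dots> = (\<Sum>q\<in>P. if f q = a then w q else 0) * g a"
    by (rule arg_cong[where f="\<lambda>s. s * g a"], rule sum.inter_filter[OF assms])
  finally show ?thesis .
qed

theorem mainTheorem10:
  fixes n :: nat and \<theta> :: real and x :: "nat set \<Rightarrow> real" and U :: "nat set"
    and yU yUb :: "nat set \<Rightarrow> real"
    and \<phi>U \<phi>Ub :: "(nat set \<Rightarrow> nat) \<Rightarrow> real"
    and \<F>U \<F>Ub :: "(nat set \<Rightarrow> nat) set"
  assumes cyc: "theta_cyclic n \<theta> x"
    and cubic: "cubic_support n x"
    and crit: "critical_cut n x U"
    and combU: "convex_comb_handpicked \<theta> x (contr_verts U) (contr_edges n x U)
                  (contr_ends U) yU \<phi>U \<F>U"
    and combUb: "convex_comb_handpicked \<theta> x (contr_verts ({1..n} - U))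
                  (contr_edges n x ({1..n} - U)) (contr_ends ({1..n} - U)) yUb \<phi>Ub \<F>Ub"
    and match: "\<And>p. set_mset p \<subseteq> supp_cut n x U \<Longrightarrow>
                  phi_vertex (contr_edges n x U) (contr_ends U) \<phi>U \<F>U 0 p =
                  phi_vertex (contr_edges n x ({1..n} - U)) (contr_ends ({1..n} - U)) \<phi>Ub \<F>Ub 0 p"
    and conn: "\<And>F. F \<in> \<F>U \<Longrightarrow>
                  mg_connected U id (\<lambda>e. if e \<subseteq> U then F e else 0)"
  shows "(\<forall>e \<in> supp_cut n x U. yU e = yUb e) \<and>
         (\<exists>\<phi> \<F>. convex_comb_handpicked \<theta> x {1..n} (supp_edges n x) id
                   (\<lambda>e. if e \<inter> U \<noteq> {} then yU e else yUb e) \<phi> \<F> \<and>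
                 (\<forall>e \<in> contr_edges n x U. phi2 \<phi> \<F> e = phi2 \<phi>U \<F>U e) \<and>
                 (\<forall>e \<in> contr_edges n x ({1..n} - U). phi2 \<phi> \<F> e = phi2 \<phi>Ub \<F>Ub e) \<and>
                 card \<F> \<le> card \<F>U + card \<F>Ub)"
proof -
  define Ub where "Ub = {1..n} - U"
  define EU where "EU = contr_edges n x U"
  define EUb where "EUb = contr_edges n x Ub"
  define ka where "ka = (\<lambda>a. delta_F EU (contr_ends U) a 0)"
  define kb where "kb = (\<lambda>b. delta_F EUb (contr_ends Ub) b 0)"
  have Usub: "U \<subseteq> {1..n}" using crit unfolding critical_cut_def proper_cut_def by auto
  have Ubsub: "Ub \<subseteq> {1..n}" unfolding Ub_def by auto
  have fU: "finite \<F>U" and hU: "\<forall>F\<in>\<F>U. handpicked \<theta> x (contr_verts U) EU (contr_ends U) F"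
    and nU: "\<forall>F\<in>\<F>U. \<phi>U F \<ge> 0" and sU: "sum \<phi>U \<F>U = 1"
    and yUe: "\<forall>e\<in>EU. yU e = (\<Sum>F\<in>\<F>U. \<phi>U F * real (F e))"
    using combU unfolding convex_comb_handpicked_def EU_def[symmetric] by blast+
  have fUb: "finite \<F>Ub" and hUb: "\<forall>F\<in>\<F>Ub. handpicked \<theta> x (contr_verts Ub) EUb (contr_ends Ub) F"
    and nUb: "\<forall>F\<in>\<F>Ub. \<phi>Ub F \<ge> 0" and sUb: "sum \<phi>Ub \<F>Ub = 1"
    and yUbe: "\<forall>e\<in>EUb. yUb e = (\<Sum>F\<in>\<F>Ub. \<phi>Ub F * real (F e))"
  proof -
    have c: "convex_comb_handpicked \<theta> x (contr_verts Ub) EUb (contr_ends Ub) yUb \<phi>Ub \<F>Ub"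
      using combUb unfolding EUb_def Ub_def .
    show "finite \<F>Ub" "\<forall>F\<in>\<F>Ub. handpicked \<theta> x (contr_verts Ub) EUb (contr_ends Ub) F"
      "\<forall>F\<in>\<F>Ub. \<phi>Ub F \<ge> 0" "sum \<phi>Ub \<F>Ub = 1"
      "\<forall>e\<in>EUb. yUb e = (\<Sum>F\<in>\<F>Ub. \<phi>Ub F * real (F e))"
      using c unfolding convex_comb_handpicked_def by blast+
  qed
  have fEU: "finite EU" unfolding EU_def by (rule contr_edges_finite)
  have fEUb: "finite EUb" unfolding EUb_def by (rule contr_edges_finite)
  have kaS: "\<And>a. set_mset (ka a) \<subseteq> supp_cut n x U"
  proof
    fix a e assume ee: "e \<in># ka a"
    have "e \<in> {e\<in>EU. 0 \<in> contr_ends U e}"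
      by (rule subsetD[OF set_delta[OF fEU, of "contr_ends U" a 0]]) (use ee in \<open>simp add: ka_def\<close>)
    then have e: "e \<in> EU" "0 \<in> contr_ends U e" by simp_all
    then have "e \<in> supp_edges n x \<and> e \<inter> U \<noteq> {} \<and> \<not> e \<subseteq> U"
      using zero_ends[OF Usub] unfolding EU_def by blast
    then show "e \<in> supp_cut n x U" unfolding supp_cut_def
      using in_cut[OF _ Usub] supp_edges_sub by blast
  qed
  have kbS: "\<And>b. set_mset (kb b) \<subseteq> supp_cut n x U"
  proof
    fix b e assume ee: "e \<in># kb b"
    have "e \<in> {e\<in>EUb. 0 \<in> contr_ends Ub e}"
      by (rule subsetD[OF set_delta[OF fEUb, of "contr_ends Ub" b 0]]) (use ee in \<open>simp add: kb_def\<close>)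
    then have e: "e \<in> EUb" "0 \<in> contr_ends Ub e" by simp_all
    then have es: "e \<in> supp_edges n x \<and> e \<inter> Ub \<noteq> {} \<and> \<not> e \<subseteq> Ub"
      using zero_ends[OF Ubsub] unfolding EUb_def by blast
    then have "e \<in> Kn_edges n" using supp_edges_sub by blast
    then have "e \<subseteq> {1..n}" by (rule Kn_edge_sub)
    then have "e \<inter> U \<noteq> {} \<and> \<not> e \<subseteq> U" using es Usub unfolding Ub_def by auto
    then show "e \<in> supp_cut n x U" unfolding supp_cut_def
      using in_cut[OF _ Usub] supp_edges_sub es by blast
  qed
  have cl: "\<forall>p. sum \<phi>U {a\<in>\<F>U. ka a = p} = sum \<phi>Ub {b\<in>\<F>Ub. kb b = p}"
  proof
    fix p
    show "sum \<phi>U {a\<in>\<F>U. ka a = p} = sum \<phi>Ub {b\<in>\<F>Ub. kb b = p}"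
    proof (cases "set_mset p \<subseteq> supp_cut n x U")
      case True
      show ?thesis using match[OF True] unfolding phi_vertex_def ka_def kb_def EU_def EUb_def Ub_def .
    next
      case False
      have e1: "{a\<in>\<F>U. ka a = p} = {}" using kaS False by blast
      have e2: "{b\<in>\<F>Ub. kb b = p} = {}" using kbS False by blast
      show ?thesis unfolding e1 e2 by simp
    qed
  qed
  obtain P w where P: "P \<subseteq> \<F>U \<times> \<F>Ub" "card P \<le> card \<F>U + card \<F>Ub"
     "\<forall>q\<in>P. ka (fst q) = kb (snd q) \<and> w q \<ge> 0"
     "\<forall>a\<in>\<F>U. (\<Sum>q\<in>P. if fst q = a then w q else 0) = \<phi>U a"
     "\<forall>b\<in>\<F>Ub. (\<Sum>q\<in>P. if snd q = b then w q else 0) = \<phi>Ub b"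
    using coupling[OF fU fUb nU nUb cl] by blast
  have fP: "finite P" using P(1) fU fUb by (meson finite_SigmaI finite_subset)
  have K2: "\<And>q e. q \<in> P \<Longrightarrow> e \<in> EU \<Longrightarrow> e \<in> EUb \<Longrightarrow> fst q e = snd q e"
  proof -
    fix q e assume q: "q \<in> P" and e: "e \<in> EU" "e \<in> EUb"
    have "e \<in> Kn_edges n" using e contr_edges_sub supp_edges_sub unfolding EU_def by blast
    then have e1: "e \<subseteq> {1..n}" by (rule Kn_edge_sub)
    have "e \<inter> Ub \<noteq> {}" "e \<inter> U \<noteq> {}" using e unfolding EU_def EUb_def contr_edges_def by auto
    then have "\<not> e \<subseteq> U" "\<not> e \<subseteq> Ub" unfolding Ub_def by auto
    then have z: "0 \<in> contr_ends U e" "0 \<in> contr_ends Ub e" unfolding contr_ends_def by auto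
    have "fst q e = count (ka (fst q)) e" unfolding ka_def using count_delta[where ends="contr_ends U", OF fEU e(1) z(1)] by simp
    also have "\<dots> = count (kb (snd q)) e" using P(3) q by simp
    also have "\<dots> = snd q e" unfolding kb_def using count_delta[where ends="contr_ends Ub", OF fEUb e(2) z(2)] by simp
    finally show "fst q e = snd q e" .
  qed
  define glue where "glue = (\<lambda>q::(nat set \<Rightarrow> nat) \<times> (nat set \<Rightarrow> nat). (\<lambda>e. if e \<inter> U \<noteq> {} then fst q e else snd q e))"
  have K3a: "\<And>q e. e \<in> EU \<Longrightarrow> glue q e = fst q e"
    unfolding glue_def EU_def contr_edges_def by auto
  have K3b: "\<And>q e. q \<in> P \<Longrightarrow> e \<in> EUb \<Longrightarrow> glue q e = snd q e"
  proof -
    fix q e assume q: "q \<in> P" and e: "e \<in> EUb"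
    show "glue q e = snd q e"
    proof (cases "e \<inter> U = {}")
      case True then show ?thesis unfolding glue_def by simp
    next
      case False
      then have "e \<in> EU" using e unfolding EU_def EUb_def contr_edges_def by auto
      then show ?thesis using K2[OF q _ e] False unfolding glue_def by simp
    qed
  qed
  define FF where "FF = glue ` P"
  define \<phi> where "\<phi> = (\<lambda>F. \<Sum>q\<in>{q\<in>P. glue q = F}. w q)"
  have fFF: "finite FF" unfolding FF_def using fP by simp
  have K4: "\<And>h. (\<Sum>F\<in>FF. \<phi> F * h F) = (\<Sum>q\<in>P. w q * h (glue q))"
  proof -
    fix h :: "(nat set \<Rightarrow> nat) \<Rightarrow> real"
    have "(\<Sum>F\<in>FF. \<phi> F * h F) = (\<Sum>F\<in>FF. \<Sum>q\<in>{q\<in>P. glue q = F}. w q * h (glue q))"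
      unfolding \<phi>_def sum_distrib_right by (intro sum.cong) auto
    also have "\<dots> = (\<Sum>q\<in>P. w q * h (glue q))"
      using sum.group[OF fP fFF, of glue "\<lambda>q. w q * h (glue q)"] unfolding FF_def by simp
    finally show "(\<Sum>F\<in>FF. \<phi> F * h F) = (\<Sum>q\<in>P. w q * h (glue q))" .
  qed
  have K5a: "\<And>g. (\<Sum>q\<in>P. w q * g (fst q)) = (\<Sum>a\<in>\<F>U. \<phi>U a * g a)"
  proof -
    fix g :: "(nat set \<Rightarrow> nat) \<Rightarrow> real"
    have "(\<Sum>q\<in>P. w q * g (fst q)) = (\<Sum>a\<in>\<F>U. \<Sum>q\<in>{q\<in>P. fst q = a}. w q * g (fst q))"
      using sum.group[OF fP fU, of fst "\<lambda>q. w q * g (fst q)"] P(1) by fastforce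
    also have "\<dots> = (\<Sum>a\<in>\<F>U. (\<Sum>q\<in>P. if fst q = a then w q else 0) * g a)"
      by (intro sum.cong refl) (rule fiber_sum[OF fP])
    also have "\<dots> = (\<Sum>a\<in>\<F>U. \<phi>U a * g a)" using P(4) by simp
    finally show "(\<Sum>q\<in>P. w q * g (fst q)) = (\<Sum>a\<in>\<F>U. \<phi>U a * g a)" .
  qed
  have K5b: "\<And>g. (\<Sum>q\<in>P. w q * g (snd q)) = (\<Sum>b\<in>\<F>Ub. \<phi>Ub b * g b)"
  proof -
    fix g :: "(nat set \<Rightarrow> nat) \<Rightarrow> real"
    have "(\<Sum>q\<in>P. w q * g (snd q)) = (\<Sum>b\<in>\<F>Ub. \<Sum>q\<in>{q\<in>P. snd q = b}. w q * g (snd q))"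
      using sum.group[OF fP fUb, of snd "\<lambda>q. w q * g (snd q)"] P(1) by fastforce
    also have "\<dots> = (\<Sum>b\<in>\<F>Ub. (\<Sum>q\<in>P. if snd q = b then w q else 0) * g b)"
      by (intro sum.cong refl) (rule fiber_sum[OF fP])
    also have "\<dots> = (\<Sum>b\<in>\<F>Ub. \<phi>Ub b * g b)" using P(5) by simp
    finally show "(\<Sum>q\<in>P. w q * g (snd q)) = (\<Sum>b\<in>\<F>Ub. \<phi>Ub b * g b)" .
  qed
  have part1: "\<forall>e \<in> supp_cut n x U. yU e = yUb e"
  proof
    fix e assume e: "e \<in> supp_cut n x U"
    then have es: "e \<in> supp_edges n x" and "e \<in> cut n U" unfolding supp_cut_def by auto
    then have "e \<inter> U \<noteq> {}" "e \<inter> Ub \<noteq> {}" using cut_both unfolding Ub_def by blast+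
    then have eU: "e \<in> EU" and eUb: "e \<in> EUb" using es unfolding EU_def EUb_def contr_edges_def by auto
    have "yU e = (\<Sum>q\<in>P. w q * real (fst q e))" using yUe eU K5a[of "\<lambda>a. real (a e)"] by simp
    also have "\<dots> = (\<Sum>q\<in>P. w q * real (snd q e))" using K2[OF _ eU eUb] by (intro sum.cong) auto
    also have "\<dots> = yUb e" using yUbe eUb K5b[of "\<lambda>b. real (b e)"] by simp
    finally show "yU e = yUb e" .
  qed
  have hFF: "\<forall>F\<in>FF. handpicked \<theta> x {1..n} (supp_edges n x) id F"
  proof
    fix F assume "F \<in> FF"
    then obtain q where q: "q \<in> P" "F = glue q" unfolding FF_def by auto
    have a: "fst q \<in> \<F>U" and b: "snd q \<in> \<F>Ub" using q P(1) by auto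
    have "handpicked \<theta> x {1..n} (supp_edges n x) id (\<lambda>e. if e \<inter> U \<noteq> {} then fst q e else snd q e)"
      using glue_handpicked[OF Usub, of \<theta> x "fst q" "snd q"] hU a hUb b conn[OF a] K2[OF q(1)]
      unfolding EU_def EUb_def Ub_def by blast
    then show "handpicked \<theta> x {1..n} (supp_edges n x) id F" using q unfolding glue_def by simp
  qed
  have nFF: "\<forall>F\<in>FF. \<phi> F \<ge> 0" unfolding \<phi>_def using P(3) by (auto intro: sum_nonneg)
  have sFF: "sum \<phi> FF = 1"
    using K4[of "\<lambda>_. 1"] K5a[of "\<lambda>_. 1"] sU by simp
  have yFF: "\<forall>e\<in>supp_edges n x. (\<lambda>e. if e \<inter> U \<noteq> {} then yU e else yUb e) e = (\<Sum>F\<in>FF. \<phi> F * real (F e))"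
  proof
    fix e assume es: "e \<in> supp_edges n x"
    have "e \<in> Kn_edges n" using es supp_edges_sub by blast
    then obtain i j where ij: "e = {i,j}" "i \<in> {1..n}" "j \<in> {1..n}" by (rule Kn_edgesE)
    have sumF: "(\<Sum>F\<in>FF. \<phi> F * real (F e)) = (\<Sum>q\<in>P. w q * real (glue q e))"
      using K4[of "\<lambda>F. real (F e)"] .
    show "(\<lambda>e. if e \<inter> U \<noteq> {} then yU e else yUb e) e = (\<Sum>F\<in>FF. \<phi> F * real (F e))"
    proof (cases "e \<inter> U \<noteq> {}")
      case True
      then have eU: "e \<in> EU" using es unfolding EU_def contr_edges_def by auto
      have "(\<Sum>q\<in>P. w q * real (glue q e)) = (\<Sum>q\<in>P. w q * real (fst q e))"
        using K3a[OF eU] by simp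
      then show ?thesis using True sumF yUe eU K5a[of "\<lambda>a. real (a e)"] by simp
    next
      case False
      then have "e \<inter> Ub \<noteq> {}" using ij unfolding Ub_def by auto
      then have eUb: "e \<in> EUb" using es unfolding EUb_def contr_edges_def by auto
      have "(\<Sum>q\<in>P. w q * real (glue q e)) = (\<Sum>q\<in>P. w q * real (snd q e))"
        using K3b[OF _ eUb] by (intro sum.cong) auto
      then show ?thesis using False sumF yUbe eUb K5b[of "\<lambda>b. real (b e)"] by simp
    qed
  qed
  have phi2eq: "\<And>\<psi> G e. finite G \<Longrightarrow> phi2 \<psi> G e = (\<Sum>F\<in>G. \<psi> F * (if F e = 2 then 1 else 0))"
    unfolding phi2_def by (simp add: sum.inter_filter[symmetric] if_distrib cong: if_cong)
  have p2U: "\<forall>e \<in> EU. phi2 \<phi> FF e = phi2 \<phi>U \<F>U e"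
  proof
    fix e assume eU: "e \<in> EU"
    have "phi2 \<phi> FF e = (\<Sum>q\<in>P. w q * (if glue q e = 2 then 1 else 0))"
      using phi2eq[OF fFF] K4[of "\<lambda>F. if F e = 2 then 1 else 0"] by simp
    also have "\<dots> = (\<Sum>q\<in>P. w q * (if fst q e = 2 then 1 else 0))" using K3a[OF eU] by simp
    also have "\<dots> = phi2 \<phi>U \<F>U e"
      using phi2eq[OF fU] K5a[of "\<lambda>a. if a e = 2 then 1 else 0"] by simp
    finally show "phi2 \<phi> FF e = phi2 \<phi>U \<F>U e" .
  qed
  have p2Ub: "\<forall>e \<in> EUb. phi2 \<phi> FF e = phi2 \<phi>Ub \<F>Ub e"
  proof
    fix e assume eUb: "e \<in> EUb"
    have "phi2 \<phi> FF e = (\<Sum>q\<in>P. w q * (if glue q e = 2 then 1 else 0))"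
      using phi2eq[OF fFF] K4[of "\<lambda>F. if F e = 2 then 1 else 0"] by simp
    also have "\<dots> = (\<Sum>q\<in>P. w q * (if snd q e = 2 then 1 else 0))"
      using K3b[OF _ eUb] by (intro sum.cong) auto
    also have "\<dots> = phi2 \<phi>Ub \<F>Ub e"
      using phi2eq[OF fUb] K5b[of "\<lambda>b. if b e = 2 then 1 else 0"] by simp
    finally show "phi2 \<phi> FF e = phi2 \<phi>Ub \<F>Ub e" .
  qed
  have cFF: "card FF \<le> card \<F>U + card \<F>Ub"
    using card_image_le[OF fP, of glue] P(2) unfolding FF_def by simp
  have "convex_comb_handpicked \<theta> x {1..n} (supp_edges n x) id
                   (\<lambda>e. if e \<inter> U \<noteq> {} then yU e else yUb e) \<phi> FF"
    unfolding convex_comb_handpicked_def using fFF hFF nFF sFF yFF by blast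
  note cc = this
  have p2U': "\<forall>e \<in> contr_edges n x U. phi2 \<phi> FF e = phi2 \<phi>U \<F>U e" using p2U unfolding EU_def .
  have p2Ub': "\<forall>e \<in> contr_edges n x ({1..n} - U). phi2 \<phi> FF e = phi2 \<phi>Ub \<F>Ub e"
    using p2Ub unfolding EUb_def Ub_def .
  have ex: "\<exists>\<phi> \<F>. convex_comb_handpicked \<theta> x {1..n} (supp_edges n x) id
                   (\<lambda>e. if e \<inter> U \<noteq> {} then yU e else yUb e) \<phi> \<F> \<and>
                 (\<forall>e \<in> contr_edges n x U. phi2 \<phi> \<F> e = phi2 \<phi>U \<F>U e) \<and>
                 (\<forall>e \<in> contr_edges n x ({1..n} - U). phi2 \<phi> \<F> e = phi2 \<phi>Ub \<F>Ub e) \<and>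
                 card \<F> \<le> card \<F>U + card \<F>Ub"
    by (rule exI[of _ \<phi>], rule exI[of _ FF], intro conjI, fact cc, fact p2U', fact p2Ub', fact cFF)
  show ?thesis by (rule conjI[OF part1 ex])
qed

end
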